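(* Let $\langle v,w\rangle=g(v,w)+\mathrm{i}\,\omega(v,w)$ for $v,w\in V$, and let $M\in\mathcal{G}$. Then for all $v,w\in V$: $$\langle C_Mv,w\rangle=\langle v,C_{M^{-1}}w\rangle,\qquad \langle D_Mv,w\rangle=\begin{cases}-\langle D_{M^{-1}}w,v\rangle&\text{(bosons)}\\ +\langle D_{M^{-1}}w,v\rangle&\text{(fermions)}\end{cases},$$ and, when $C_M$ is invertible so that $Z_M=C_M^{-1}D_M$ is defined, $$\langle Z_Mv,w\rangle=\begin{cases}+\langle Z_Mw,v\rangle&\text{(bosons)}\\ -\langle Z_Mw,v\rangle&\text{(fermions)}\end{cases}.$$
   Context: $V=\mathbb{R}^{2N}$. Bosons: symplectic form $\Omega^{ab}$ (standard $\begin{pmatrix}0&\mathbb{1}\\-\mathbb{1}&0\end{pmatrix}$), $\mathcal{G}=\mathrm{Sp}(2N,\mathbb{R})$, $J$ a complex structure ($J^2=-\mathbb{1}$) with $J\Omega J^\intercal=\Omega$ and $G:=-J\Omega$ positive definite. Fermions: metric $G=\mathbb{1}$, $\mathcal{G}=\mathrm{SO}(2N,\mathbb{R})$, $J$ orthogonal with $J^2=-\mathbb{1}$, and $\Omega:=JG$. In both cases $g=G^{-1}$ and $\omega=\Omega^{-1}$ are the corresponding bilinear forms on $V$, and $V$ is regarded as a complex vector space with $\mathrm{i}$ acting as $J$. $C_M=\frac12(M-JMJ)$, $D_M=\frac12(M+JMJ)$. *)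

theory Defs
  imports "HOL-Analysis.Analysis"
begin

text \<open>V = R^{2N} is modelled as real^('n + 'n), N = CARD('n); the first copy of 'n
 indexes the first N coordinates, the second copy the last N coordinates.
 Matrices act on column vectors by *v; bilinear forms are matrices B with
 B(v,w) = v \<bullet> (B *v w).\<close>

definition sympOmega :: "real^('n::finite + 'n)^('n + 'n)" where
  "sympOmega = (\<chi> i j. (case (i, j) of
       (Inl a, Inr b) \<Rightarrow> (if a = b then 1 else 0)
     | (Inr a, Inl b) \<Rightarrow> (if a = b then -1 else 0)
     | _ \<Rightarrow> 0))"

definition cform :: "real^'m^'m \<Rightarrow> real^'m^'m \<Rightarrow> real^'m \<Rightarrow> real^'m \<Rightarrow> complex" where
  "cform g \<omega> v w = complex_of_real (v \<bullet> (g *v w)) + \<i> * complex_of_real (v \<bullet> (\<omega> *v w))"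

definition CM :: "real^'m^'m \<Rightarrow> real^'m^'m \<Rightarrow> real^'m^'m" where
  "CM J M = (1/2) *\<^sub>R (M - J ** M ** J)"

definition DM :: "real^'m^'m \<Rightarrow> real^'m^'m \<Rightarrow> real^'m^'m" where
  "DM J M = (1/2) *\<^sub>R (M + J ** M ** J)"

definition ZM :: "real^'m^'m \<Rightarrow> real^'m^'m \<Rightarrow> real^'m^'m" where
  "ZM J M = matrix_inv (CM J M) ** DM J M"

text \<open>Bosonic data: G = -J Omega, g = G^{-1}, omega = Omega^{-1}.\<close>
definition bos_form :: "real^('n::finite + 'n)^('n + 'n) \<Rightarrow> real^('n + 'n) \<Rightarrow> real^('n + 'n) \<Rightarrow> complex" where
  "bos_form J = cform (matrix_inv (- (J ** sympOmega))) (matrix_inv sympOmega)"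

text \<open>Fermionic data: G = 1, Omega = J G, g = G^{-1}, omega = Omega^{-1}.\<close>
definition ferm_form :: "real^('n::finite + 'n)^('n + 'n) \<Rightarrow> real^('n + 'n) \<Rightarrow> real^('n + 'n) \<Rightarrow> complex" where
  "ferm_form J = cform (matrix_inv (mat 1)) (matrix_inv (J ** mat 1))"

end

theory Submission imports Defs begin

lemma dot_tr: "((A::real^'m^'m) *v x) \<bullet> y = x \<bullet> (transpose A *v y)"
  by (metis dot_lmul_matrix vector_transpose_matrix)

lemma mm_neg_l: "(- A) ** (B::real^'m^'m) = - (A ** B)"
  by (simp add: matrix_matrix_mult_def vec_eq_iff sum_negf)
lemma mm_neg_r: "A ** (- B::real^'m^'m) = - (A ** B)"
  by (simp add: matrix_matrix_mult_def vec_eq_iff sum_negf)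
lemma mm_add_r: "(A + B) ** (C::real^'m^'m) = A ** C + B ** C"
  by (simp add: matrix_matrix_mult_def vec_eq_iff sum.distrib algebra_simps)
lemma mm_diff_l: "A ** (B - C::real^'m^'m) = A ** B - A ** C"
  by (simp add: matrix_matrix_mult_def vec_eq_iff sum_subtractf algebra_simps)
lemma mm_diff_r: "(A - B) ** (C::real^'m^'m) = A ** C - B ** C"
  by (simp add: matrix_matrix_mult_def vec_eq_iff sum_subtractf algebra_simps)
lemma mm_sc_l: "(c *\<^sub>R A) ** (B::real^'m^'m) = c *\<^sub>R (A ** B)"
  by (simp add: scalar_matrix_assoc)
lemma mm_sc_r: "A ** (c *\<^sub>R B::real^'m^'m) = c *\<^sub>R (A ** B)"
  by (simp add: matrix_scalar_ac scalar_matrix_assoc)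
lemma tr_add: "transpose (A + B::real^'m^'m) = transpose A + transpose B"
  by (simp add: transpose_def vec_eq_iff)
lemma tr_diff: "transpose (A - B::real^'m^'m) = transpose A - transpose B"
  by (simp add: transpose_def vec_eq_iff)
lemma tr_neg: "transpose (- A::real^'m^'m) = - transpose A"
  by (simp add: transpose_def vec_eq_iff)

lemmas msimps = matrix_add_ldistrib mm_add_r mm_diff_l mm_diff_r mm_neg_l mm_neg_r
  mm_sc_l mm_sc_r matrix_mul_assoc tr_add tr_diff tr_neg transpose_scalar matrix_transpose_mul

lemma ctx: "A ** B = (C::real^'m^'m) \<Longrightarrow> (X::real^'m^'m) ** A ** B = X ** C"
  by (metis matrix_mul_assoc)

lemma inv_eq: fixes A B :: "real^'m^'m" assumes "A ** B = mat 1" shows "matrix_inv A = B" "B ** A = mat 1"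
proof -
  have BA: "B ** A = mat 1" using assms matrix_left_right_inverse[of A B] by simp
  then have "\<exists>A'. A ** A' = mat 1 \<and> A' ** A = mat 1" using assms by blast
  then have h: "A ** matrix_inv A = mat 1 \<and> matrix_inv A ** A = mat 1"
    unfolding matrix_inv_def by (rule someI_ex)
  have "matrix_inv A = matrix_inv A ** (A ** B)" using assms by simp
  also have "\<dots> = B" using h by (simp add: matrix_mul_assoc)
  finally show "matrix_inv A = B" .
  show "B ** A = mat 1" by (rule BA)
qed

lemma inv_props: assumes "invertible (A::real^'m^'m)"
  shows "A ** matrix_inv A = mat 1" "matrix_inv A ** A = mat 1"
proof -
  have "\<exists>A'. A ** A' = mat 1 \<and> A' ** A = mat 1" using assms unfolding invertible_def by blast
  then have h: "A ** matrix_inv A = mat 1 \<and> matrix_inv A ** A = mat 1"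
    unfolding matrix_inv_def by (rule someI_ex)
  then show "A ** matrix_inv A = mat 1" "matrix_inv A ** A = mat 1" by auto
qed

lemma cform_adj:
  assumes "transpose A ** g = g ** B" "transpose A ** \<omega> = \<omega> ** B"
  shows "cform g \<omega> (A *v v) w = cform g \<omega> v (B *v w)"
  unfolding cform_def dot_tr
  by (simp add: matrix_vector_mul_assoc assms)

lemma cform_swap:
  assumes "transpose A ** g = c *\<^sub>R (transpose g ** B)" "transpose A ** \<omega> = c *\<^sub>R (transpose \<omega> ** B)"
  shows "cform g \<omega> (A *v v) w = of_real c * cform g \<omega> (B *v w) v"
proof -
  have 1: "(A *v v) \<bullet> (P *v w) = c * ((B *v w) \<bullet> (P *v v))"
    if "transpose A ** P = c *\<^sub>R (transpose P ** B)" for P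
  proof -
    have "(A *v v) \<bullet> (P *v w) = v \<bullet> ((transpose A ** P) *v w)"
      by (simp add: dot_tr matrix_vector_mul_assoc)
    also have "\<dots> = c * (v \<bullet> ((transpose P ** B) *v w))"
      by (simp add: that scaleR_matrix_vector_assoc[symmetric])
    also have "v \<bullet> ((transpose P ** B) *v w) = (B *v w) \<bullet> (P *v v)"
      by (metis dot_tr inner_commute matrix_vector_mul_assoc)
    finally show ?thesis .
  qed
  show ?thesis unfolding cform_def 1[OF assms(1)] 1[OF assms(2)]
    by (simp add: algebra_simps)
qed

lemma JJ_ctx: "J ** J = - mat 1 \<Longrightarrow> X ** J ** J = - (X::real^'m^'m)"
  by (metis matrix_mul_assoc mm_neg_r matrix_mul_rid)

lemma C_comm: assumes "J ** J = - mat (1::real)" shows "J ** CM J M = CM J M ** (J::real^'m^'m)"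
  unfolding CM_def using JJ_ctx[OF assms] assms by (simp add: msimps algebra_simps)

lemma D_anti: assumes "J ** J = - mat (1::real)" shows "J ** DM J M = - (DM J M ** (J::real^'m^'m))"
  unfolding DM_def using JJ_ctx[OF assms] assms by (simp add: msimps algebra_simps)

lemma CD_anti: assumes "J ** J = - mat (1::real)" "M ** N = mat 1"
  shows "CM J M ** DM J N = - (DM J M ** CM J (N::real^'m^'m))"
proof -
  have a: "X ** M ** N = X" for X :: "real^'m^'m" using ctx[OF assms(2)] by simp
  show ?thesis
  unfolding CM_def DM_def using JJ_ctx[OF assms(1)] assms a by (simp add: msimps algebra_simps)
qed

lemma Z_core: fixes C Ci C' Ci' D D' :: "real^'m^'m" assumes "C ** Ci = mat 1" "Ci ** C = mat 1" "C' ** Ci' = mat 1"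
  "C ** D' = - (D ** (C'::real^'m^'m))"
  shows "D' ** Ci' = - (Ci ** D)"
proof -
  have "D' ** Ci' = Ci ** C ** D' ** Ci'" using assms(2) by simp
  also have "\<dots> = Ci ** (C ** D') ** Ci'" by (simp add: matrix_mul_assoc)
  also have "\<dots> = - (Ci ** D ** (C' ** Ci'))" using assms(4) by (simp add: msimps)
  also have "\<dots> = - (Ci ** D)" using assms(3) by simp
  finally show ?thesis .
qed

lemma Ci_comm: fixes J C :: "real^'m^'m" assumes "invertible C" "J ** C = C ** J"
  shows "J ** matrix_inv C = matrix_inv C ** J"
proof -
  note i = inv_props[OF assms(1)]
  have "J ** matrix_inv C = matrix_inv C ** C ** J ** matrix_inv C" using i by simp
  also have "\<dots> = matrix_inv C ** (J ** C) ** matrix_inv C" using assms(2) by (simp add: matrix_mul_assoc)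
  also have "\<dots> = matrix_inv C ** J" using i by (simp add: matrix_mul_assoc[symmetric])
  finally show ?thesis .
qed

lemma bos_alg:
  fixes J M N w :: "real^'m^'m"
  assumes JJ: "J ** J = - mat 1" and Jw: "transpose J ** w = - (w ** J)"
    and Mw: "transpose M ** w = w ** N" and MN: "M ** N = mat 1" and NM: "N ** M = mat 1"
    and ww: "w ** w = - mat 1" and wt: "transpose w = - w"
  shows "transpose (CM J M) ** (w ** J) = (w ** J) ** CM J N"
    "transpose (CM J M) ** w = w ** CM J N"
    "transpose (DM J M) ** (w ** J) = (-1) *\<^sub>R (transpose (w ** J) ** DM J N)"
    "transpose (DM J M) ** w = (-1) *\<^sub>R (transpose w ** DM J N)"
    "invertible (CM J M) \<Longrightarrow> transpose (ZM J M) ** (w ** J) = 1 *\<^sub>R (transpose (w ** J) ** ZM J M)"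
    "invertible (CM J M) \<Longrightarrow> transpose (ZM J M) ** w = 1 *\<^sub>R (transpose w ** ZM J M)"
proof -
  have Jw': "X ** transpose J ** w = - (X ** w ** J)" for X :: "real^'m^'m"
    using ctx[OF Jw, of X] by (simp add: msimps)
  have Mw': "X ** transpose M ** w = X ** w ** N" for X :: "real^'m^'m"
    using ctx[OF Mw, of X] by (simp add: msimps)
  have JJ' : "X ** J ** J = - X" for X :: "real^'m^'m" using JJ_ctx[OF JJ] .
  show C2: "transpose (CM J M) ** w = w ** CM J N"
    unfolding CM_def using Jw' Mw' JJ' Jw Mw by (simp add: msimps algebra_simps)
  show "transpose (CM J M) ** (w ** J) = (w ** J) ** CM J N"
    by (metis C2 C_comm JJ matrix_mul_assoc)
  show D4: "transpose (DM J M) ** w = (-1) *\<^sub>R (transpose w ** DM J N)"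
    unfolding DM_def wt using Jw' Mw' JJ' Jw Mw by (simp add: msimps algebra_simps)
  have D4': "transpose (DM J M) ** w = w ** DM J N" using D4 wt by (simp add: msimps)
  show "transpose (DM J M) ** (w ** J) = (-1) *\<^sub>R (transpose (w ** J) ** DM J N)"
  proof -
    have "transpose (DM J M) ** (w ** J) = w ** (DM J N ** J)"
      using D4' by (simp add: matrix_mul_assoc)
    also have "\<dots> = - (w ** (J ** DM J N))" using D_anti[OF JJ, of N] by (simp add: msimps)
    also have "\<dots> = (-1) *\<^sub>R (transpose (w ** J) ** DM J N)"
      using Jw wt by (simp add: msimps)
    finally show ?thesis .
  qed
  assume inv: "invertible (CM J M)"
  define C where "C = CM J M"
  define Ci where "Ci = matrix_inv C"
  define C' where "C' = CM J N"
  define Ci' where "Ci' = - (w ** transpose Ci ** w)"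
  define D where "D = DM J M"
  define D' where "D' = DM J N"
  have i1: "C ** Ci = mat 1" "Ci ** C = mat 1" using inv_props[OF inv] unfolding C_def Ci_def by auto
  have C'eq: "C' = - (w ** transpose C ** w)"
  proof -
    have "w ** transpose C ** w = w ** w ** C'" using C2 unfolding C_def C'_def by (metis matrix_mul_assoc)
    then show ?thesis using ww by (simp add: msimps)
  qed
  have tr1: "transpose Ci ** transpose C = mat 1" using i1(1) by (metis matrix_transpose_mul transpose_mat)
  have "C' ** Ci' = w ** transpose C ** (w ** w) ** transpose Ci ** w"
    unfolding C'eq Ci'_def by (simp add: msimps)
  also have "\<dots> = - (w ** (transpose C ** transpose Ci) ** w)" using ww by (simp add: msimps)
  also have "\<dots> = mat 1"
  proof -
    have "transpose C ** transpose Ci = mat 1" using i1(2) by (metis matrix_transpose_mul transpose_mat)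
    then show ?thesis using ww by simp
  qed
  finally have i2: "C' ** Ci' = mat 1" .
  have CD: "C ** D' = - (D ** C')" unfolding C_def D_def C'_def D'_def using CD_anti[OF JJ MN] .
  have core: "D' ** Ci' = - (Ci ** D)" using Z_core[OF i1 i2 CD] .
  have Ciw: "transpose Ci ** w = w ** Ci'"
    unfolding Ci'_def using ww by (simp add: msimps)
  have Z: "ZM J M = Ci ** D" unfolding ZM_def Ci_def C_def D_def ..
  have Z6: "transpose (ZM J M) ** w = - (w ** ZM J M)"
  proof -
    have "transpose (ZM J M) ** w = transpose D ** (transpose Ci ** w)"
      unfolding Z by (simp add: msimps)
    also have "\<dots> = transpose D ** w ** Ci'" unfolding Ciw by (simp add: matrix_mul_assoc)
    also have "\<dots> = w ** (D' ** Ci')" using D4' unfolding D_def D'_def by (simp add: matrix_mul_assoc)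
    also have "\<dots> = - (w ** ZM J M)" unfolding core Z by (simp add: msimps)
    finally show ?thesis .
  qed
  then show "transpose (ZM J M) ** w = 1 *\<^sub>R (transpose w ** ZM J M)" using wt by (simp add: msimps)
  have ZJ: "ZM J M ** J = - (J ** ZM J M)"
  proof -
    have cc: "J ** Ci = Ci ** J" unfolding Ci_def C_def using Ci_comm[OF inv C_comm[OF JJ]] .
    have "ZM J M ** J = Ci ** (D ** J)" unfolding Z by (simp add: matrix_mul_assoc)
    also have "\<dots> = - (Ci ** J ** D)"
    proof -
      have "D ** J = - (J ** D)" unfolding D_def using D_anti[OF JJ, of M] by simp
      then show ?thesis by (simp add: msimps)
    qed
    also have "\<dots> = - (J ** ZM J M)" unfolding Z cc[symmetric] by (simp add: matrix_mul_assoc)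
    finally show ?thesis .
  qed
  have "transpose (ZM J M) ** (w ** J) = - (w ** (ZM J M ** J))" using Z6 by (simp add: msimps)
  also have "\<dots> = w ** J ** ZM J M" unfolding ZJ by (simp add: msimps)
  also have "\<dots> = 1 *\<^sub>R (transpose (w ** J) ** ZM J M)" using Jw wt by (simp add: msimps)
  finally show "transpose (ZM J M) ** (w ** J) = 1 *\<^sub>R (transpose (w ** J) ** ZM J M)" .
qed

lemma ZJ_anti: fixes J M :: "real^'m^'m" assumes JJ: "J ** J = - mat 1" and inv: "invertible (CM J M)"
  shows "ZM J M ** J = - (J ** ZM J M)"
proof -
  define Ci where "Ci = matrix_inv (CM J M)"
  define D where "D = DM J M"
  have Z: "ZM J M = Ci ** D" unfolding ZM_def Ci_def D_def ..
  have cc: "J ** Ci = Ci ** J" unfolding Ci_def using Ci_comm[OF inv C_comm[OF JJ]] .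
  have "ZM J M ** J = Ci ** (D ** J)" unfolding Z by (simp add: matrix_mul_assoc)
  also have "\<dots> = - (Ci ** J ** D)"
  proof -
    have "D ** J = - (J ** D)" unfolding D_def using D_anti[OF JJ, of M] by simp
    then show ?thesis by (simp add: msimps)
  qed
  also have "\<dots> = - (J ** ZM J M)" unfolding Z cc[symmetric] by (simp add: matrix_mul_assoc)
  finally show ?thesis .
qed

lemma ferm_alg:
  fixes J M N :: "real^'m^'m"
  assumes JJ: "J ** J = - mat 1" and Jt: "transpose J = - J"
    and Nt: "transpose M = N" and MN: "M ** N = mat 1"
  shows "transpose (CM J M) ** mat 1 = mat 1 ** CM J N"
    "transpose (CM J M) ** (- J) = (- J) ** CM J N"
    "transpose (DM J M) ** mat 1 = 1 *\<^sub>R (transpose (mat 1) ** DM J N)"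
    "transpose (DM J M) ** (- J) = 1 *\<^sub>R (transpose (- J) ** DM J N)"
    "invertible (CM J M) \<Longrightarrow> transpose (ZM J M) ** mat 1 = (-1) *\<^sub>R (transpose (mat 1) ** ZM J M)"
    "invertible (CM J M) \<Longrightarrow> transpose (ZM J M) ** (- J) = (-1) *\<^sub>R (transpose (- J) ** ZM J M)"
proof -
  have C1: "transpose (CM J M) = CM J N" unfolding CM_def by (simp add: msimps Jt Nt)
  have D1: "transpose (DM J M) = DM J N" unfolding DM_def by (simp add: msimps Jt Nt)
  show "transpose (CM J M) ** mat 1 = mat 1 ** CM J N" using C1 by simp
  show "transpose (CM J M) ** (- J) = (- J) ** CM J N" using C1 C_comm[OF JJ, of N] by (simp add: msimps)
  show "transpose (DM J M) ** mat 1 = 1 *\<^sub>R (transpose (mat 1) ** DM J N)" using D1 by simp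
  show "transpose (DM J M) ** (- J) = 1 *\<^sub>R (transpose (- J) ** DM J N)"
    using D1 D_anti[OF JJ, of N] Jt by (simp add: msimps)
  assume inv: "invertible (CM J M)"
  define C where "C = CM J M"
  define Ci where "Ci = matrix_inv C"
  define C' where "C' = CM J N"
  define Ci' where "Ci' = transpose Ci"
  define D where "D = DM J M"
  define D' where "D' = DM J N"
  have i1: "C ** Ci = mat 1" "Ci ** C = mat 1" using inv_props[OF inv] unfolding C_def Ci_def by auto
  have i2: "C' ** Ci' = mat 1" unfolding C'_def Ci'_def C1[symmetric] using i1(2)
    by (metis C_def matrix_transpose_mul transpose_mat)
  have CD: "C ** D' = - (D ** C')" unfolding C_def D_def C'_def D'_def using CD_anti[OF JJ MN] .
  have core: "D' ** Ci' = - (Ci ** D)" using Z_core[OF i1 i2 CD] .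
  have Z: "ZM J M = Ci ** D" unfolding ZM_def Ci_def C_def D_def ..
  have Zt: "transpose (ZM J M) = - ZM J M"
    unfolding Z matrix_transpose_mul D_def D1 using core unfolding D'_def Ci'_def D_def by simp
  show "transpose (ZM J M) ** mat 1 = (-1) *\<^sub>R (transpose (mat 1) ** ZM J M)" using Zt by simp
  show "transpose (ZM J M) ** (- J) = (-1) *\<^sub>R (transpose (- J) ** ZM J M)"
    using Zt ZJ_anti[OF JJ inv] Jt by (simp add: msimps)
qed

lemma sum_plus_univ: "(\<Sum>k\<in>(UNIV::('a::finite + 'a) set). f k) = (\<Sum>a\<in>UNIV. f (Inl a)) + (\<Sum>a\<in>UNIV. f (Inr a))"
proof -
  have U: "(UNIV::('a + 'a) set) = range Inl \<union> range Inr" using UNIV_sum by blast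
  have "(\<Sum>k\<in>(UNIV::('a + 'a) set). f k) = sum f (range Inl) + sum f (range Inr)"
    unfolding U by (rule sum.union_disjoint) auto
  also have "\<dots> = (\<Sum>a\<in>UNIV. f (Inl a)) + (\<Sum>a\<in>UNIV. f (Inr a))"
    by (simp add: sum.reindex)
  finally show ?thesis .
qed

lemma Om_sq: "(sympOmega :: real^('n::finite + 'n)^('n + 'n)) ** sympOmega = - mat 1"
proof -
  have "((sympOmega :: real^('n::finite + 'n)^('n + 'n)) ** sympOmega) $ i $ j = (- mat 1 :: real^('n + 'n)^('n + 'n)) $ i $ j" for i j
    by (cases i; cases j) (simp_all add: matrix_matrix_mult_def sympOmega_def mat_def sum_plus_univ
         if_distrib if_distribR sum.delta cong: if_cong)
  then show ?thesis by (simp add: vec_eq_iff)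
qed

lemma Om_tr: "transpose (sympOmega :: real^('n::finite + 'n)^('n + 'n)) = - sympOmega"
  by (auto simp: vec_eq_iff sympOmega_def transpose_def split: sum.splits)

theorem lemma3:
  shows
  "(\<forall>(J :: real^('n::finite + 'n)^('n + 'n)) (M :: real^('n + 'n)^('n + 'n)).
      J ** J = - mat 1 \<and>
      J ** sympOmega ** transpose J = sympOmega \<and>
      (\<forall>x. x \<noteq> 0 \<longrightarrow> x \<bullet> ((- (J ** sympOmega)) *v x) > 0) \<and>
      M ** sympOmega ** transpose M = sympOmega
    \<longrightarrow>
      (\<forall>v w. bos_form J (CM J M *v v) w = bos_form J v (CM J (matrix_inv M) *v w)) \<and>
      (\<forall>v w. bos_form J (DM J M *v v) w = - bos_form J (DM J (matrix_inv M) *v w) v) \<and>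
      (invertible (CM J M) \<longrightarrow>
        (\<forall>v w. bos_form J (ZM J M *v v) w = bos_form J (ZM J M *v w) v)))
   \<and>
   (\<forall>(J :: real^('n::finite + 'n)^('n + 'n)) (M :: real^('n + 'n)^('n + 'n)).
      J ** J = - mat 1 \<and>
      J ** transpose J = mat 1 \<and>
      M ** transpose M = mat 1 \<and> det M = 1
    \<longrightarrow>
      (\<forall>v w. ferm_form J (CM J M *v v) w = ferm_form J v (CM J (matrix_inv M) *v w)) \<and>
      (\<forall>v w. ferm_form J (DM J M *v v) w = ferm_form J (DM J (matrix_inv M) *v w) v) \<and>
      (invertible (CM J M) \<longrightarrow>
        (\<forall>v w. ferm_form J (ZM J M *v v) w = - ferm_form J (ZM J M *v w) v)))"
proof (intro conjI allI impI; (elim conjE)?)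
  fix J M :: "real^('n::finite + 'n)^('n + 'n)"
  assume JJ: "J ** J = - mat 1" and hJ: "J ** sympOmega ** transpose J = sympOmega"
    and hM: "M ** sympOmega ** transpose M = sympOmega"
  define Om where "Om = (sympOmega :: real^('n + 'n)^('n + 'n))"
  define W where "W = - Om"
  have OO: "Om ** Om = - mat 1" unfolding Om_def by (rule Om_sq)
  have OO': "X ** Om ** Om = - X" for X :: "real^('n + 'n)^('n + 'n)" using JJ_ctx[OF OO] .
  have JJ': "X ** J ** J = - X" for X :: "real^('n + 'n)^('n + 'n)" using JJ_ctx[OF JJ] .
  have Ot: "transpose Om = - Om" unfolding Om_def by (rule Om_tr)
  have om: "matrix_inv sympOmega = W" unfolding W_def Om_def[symmetric]
    by (rule inv_eq(1)) (simp add: msimps OO)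
  have gg: "matrix_inv (- (J ** sympOmega)) = W ** J" unfolding W_def Om_def[symmetric]
    by (rule inv_eq(1)) (simp add: msimps OO' JJ)
  have bf: "bos_form J = cform (W ** J) W" unfolding bos_form_def om gg ..
  have s1: "Om ** transpose J = - J ** (J ** Om ** transpose J)" by (simp add: msimps JJ' JJ)
  also have "\<dots> = - (J ** Om)" using hJ unfolding Om_def by (simp add: msimps)
  finally have s1: "Om ** transpose J = - (J ** Om)" .
  have "transpose J = - (Om ** (Om ** transpose J))" by (simp add: msimps OO)
  also have "\<dots> = Om ** J ** Om" unfolding s1 by (simp add: msimps)
  finally have s2: "transpose J = Om ** J ** Om" .
  have Jw: "transpose J ** W = - (W ** J)" unfolding s2 W_def by (simp add: msimps OO')
  define N where "N = - (Om ** transpose M ** Om)"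
  have MN: "M ** N = mat 1" unfolding N_def using hM unfolding Om_def[symmetric]
    by (simp add: msimps OO)
  have Ninv: "matrix_inv M = N" using inv_eq(1)[OF MN] .
  have NM: "N ** M = mat 1" using inv_eq(2)[OF MN] .
  have Mw: "transpose M ** W = W ** N" unfolding N_def W_def by (simp add: msimps OO)
  have ww: "W ** W = - mat 1" unfolding W_def by (simp add: msimps OO)
  have wt: "transpose W = - W" unfolding W_def by (simp add: msimps Ot)
  note A = bos_alg[OF JJ Jw Mw MN NM ww wt]
  show "bos_form J (CM J M *v v) w = bos_form J v (CM J (matrix_inv M) *v w)" for v w
    unfolding bf Ninv by (rule cform_adj[OF A(1) A(2)])
  show "bos_form J (DM J M *v v) w = - bos_form J (DM J (matrix_inv M) *v w) v" for v w
    unfolding bf Ninv using cform_swap[OF A(3) A(4), of v w] by simp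
  assume inv: "invertible (CM J M)"
  show "bos_form J (ZM J M *v v) w = bos_form J (ZM J M *v w) v" for v w
    unfolding bf using cform_swap[OF A(5)[OF inv] A(6)[OF inv], of v w] by simp
next
  fix J M :: "real^('n::finite + 'n)^('n + 'n)"
  assume JJ: "J ** J = - mat 1" and hJ: "J ** transpose J = mat 1"
    and hM: "M ** transpose M = mat 1"
  have i1: "matrix_inv (mat 1 :: real^('n + 'n)^('n + 'n)) = mat 1" by (rule inv_eq(1)) simp
  have i2: "matrix_inv J = - J" by (rule inv_eq(1)) (simp add: msimps JJ)
  have ff: "ferm_form J = cform (mat 1) (- J)" unfolding ferm_form_def i1 matrix_mul_rid i2 ..
  have "transpose J = - (J ** J) ** transpose J" by (simp add: JJ msimps)
  also have "\<dots> = - J" by (simp add: msimps hJ[unfolded matrix_mul_assoc] flip: matrix_mul_assoc)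
  finally have Jt: "transpose J = - J" .
  have Ninv: "matrix_inv M = transpose M" using inv_eq(1)[OF hM] .
  note A = ferm_alg[OF JJ Jt refl hM]
  show "ferm_form J (CM J M *v v) w = ferm_form J v (CM J (matrix_inv M) *v w)" for v w
    unfolding ff Ninv by (rule cform_adj[OF A(1) A(2)])
  show "ferm_form J (DM J M *v v) w = ferm_form J (DM J (matrix_inv M) *v w) v" for v w
    unfolding ff Ninv using cform_swap[OF A(3) A(4), of v w] by simp
  assume inv: "invertible (CM J M)"
  show "ferm_form J (ZM J M *v v) w = - ferm_form J (ZM J M *v w) v" for v w
    unfolding ff using cform_swap[OF A(5)[OF inv] A(6)[OF inv], of v w] by simp
qed

end
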